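(* Let $\phi:G\to G$ be any endomorphism of any group $G$, and let $H$ be a subgroup of $G$ such that $\phi(H)\subset H$ and for every $x\in G$ there is $n\in\mathbb N$ with $\phi^n(x)\in H$. Let $\phi_H:H\to H$ be the restriction of $\phi$. Then $R(\phi)=R(\phi_H)$. If all the numbers $R(\phi^n)$ are finite, then $R_\phi(z)=R_{\phi_H}(z)$.
   Context: For an endomorphism $\phi$ of a group $G$, two elements $\alpha,\beta\in G$ are $\phi$-conjugate if $\beta=g\alpha\phi(g)^{-1}$ for some $g\in G$; the Reidemeister number $R(\phi)$ is the number of $\phi$-conjugacy classes, and the Reidemeister zeta function is $R_\phi(z)=\exp\left(\sum_{n\ge1}\frac{R(\phi^n)}{n}z^n\right)$. *)

theory Defs
  imports "HOL-Algebra.Group" "HOL-Computational_Algebra.Formal_Power_Series" "HOL-Library.Extended_Nat"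
begin

definition twisted_conj_rel :: "('a, 'b) monoid_scheme \<Rightarrow> ('a \<Rightarrow> 'a) \<Rightarrow> ('a \<times> 'a) set" where
  "twisted_conj_rel G phi =
     {(a, b). a \<in> carrier G \<and> b \<in> carrier G \<and>
        (\<exists>g \<in> carrier G. b = g \<otimes>\<^bsub>G\<^esub> a \<otimes>\<^bsub>G\<^esub> inv\<^bsub>G\<^esub> (phi g))}"

definition reidemeister_classes :: "('a, 'b) monoid_scheme \<Rightarrow> ('a \<Rightarrow> 'a) \<Rightarrow> 'a set set" where
  "reidemeister_classes G phi = carrier G // twisted_conj_rel G phi"

definition reidemeister_number :: "('a, 'b) monoid_scheme \<Rightarrow> ('a \<Rightarrow> 'a) \<Rightarrow> enat" where
  "reidemeister_number G phi =
     (if finite (reidemeister_classes G phi) then enat (card (reidemeister_classes G phi)) else \<infinity>)"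

text \<open>Reidemeister zeta function exp(sum_{n>=1} R(phi^n)/n z^n) as a formal power series
  (meaningful when all R(phi^n) are finite).\<close>
definition reidemeister_zeta :: "('a, 'b) monoid_scheme \<Rightarrow> ('a \<Rightarrow> 'a) \<Rightarrow> complex fps" where
  "reidemeister_zeta G phi =
     fps_exp 1 oo Abs_fps (\<lambda>n. if n = 0 then 0
        else of_nat (the_enat (reidemeister_number G (phi ^^ n))) / of_nat n)"

end

theory Submission
  imports Defs
begin

lemma quot_bij:
  assumes eA: "equiv A r" and eB: "equiv B s" and BA: "B \<subseteq> A"
    and rs: "\<forall>x\<in>B. \<forall>y\<in>B. (x,y)\<in>r \<longleftrightarrow> (x,y)\<in>s"
    and ex: "\<forall>x\<in>A. \<exists>y\<in>B. (x,y)\<in>r"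
  shows "bij_betw (\<lambda>X. r``X) (B//s) (A//r)"
proof -
  have key: "r``(s``{x}) = r``{x}" if "x \<in> B" for x
  proof
    show "r``(s``{x}) \<subseteq> r``{x}"
    proof
      fix z assume "z \<in> r``(s``{x})"
      then obtain y where y: "(x,y)\<in>s" "(y,z)\<in>r" by auto
      have "y \<in> B" using y eB by (auto simp: equiv_def refl_on_def)
      hence "(x,y)\<in>r" using rs y that by blast
      thus "z \<in> r``{x}" using y eA by (auto simp: equiv_def elim: transE)
    qed
    show "r``{x} \<subseteq> r``(s``{x})" using that eB by (auto simp: equiv_def refl_on_def)
  qed
  show ?thesis
  proof (rule bij_betw_imageI)
    show "inj_on (\<lambda>X. r``X) (B//s)"
    proof (rule inj_onI)
      fix X Y assume "X \<in> B//s" "Y \<in> B//s" and eq: "r``X = r``Y"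
      then obtain x y where xy: "x\<in>B" "y\<in>B" "X = s``{x}" "Y = s``{y}"
        by (auto simp: quotient_def)
      hence "r``{x} = r``{y}" using eq key by simp
      hence "(x,y)\<in>r" using eq_equiv_class_iff[OF eA] xy BA by blast
      hence "(x,y)\<in>s" using rs xy by blast
      thus "X = Y" using xy eB equiv_class_eq by metis
    qed
    show "(\<lambda>X. r``X) ` (B//s) = A//r"
    proof
      show "(\<lambda>X. r``X) ` (B//s) \<subseteq> A//r"
        unfolding quotient_def using key BA by blast
      show "A//r \<subseteq> (\<lambda>X. r``X) ` (B//s)"
      proof
        fix C assume "C \<in> A//r"
        then obtain x where x: "x\<in>A" "C = r``{x}" by (auto simp: quotient_def)
        then obtain y where y: "y\<in>B" "(x,y)\<in>r" using ex by blast
        have "C = r``{y}" using x y eA equiv_class_eq by metis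
        also have "\<dots> = r``(s``{y})" using key y by simp
        finally show "C \<in> (\<lambda>X. r``X) ` (B//s)" using y by (auto simp: quotient_def)
      qed
    qed
  qed
qed

lemma twisted_equiv:
  fixes G :: "('a, 'b) monoid_scheme" (structure)
  assumes G: "group G" and h: "phi \<in> hom G G"
  shows "equiv (carrier G) (twisted_conj_rel G phi)"
proof -
  interpret group G by fact
  interpret gh: group_hom G G phi using h G by (simp add: group_hom_def group_hom_axioms_def)
  have pc: "\<And>x. x \<in> carrier G \<Longrightarrow> phi x \<in> carrier G" by simp
  show ?thesis
  proof (rule equivI)
    show "refl_on (carrier G) (twisted_conj_rel G phi)"
      unfolding refl_on_def twisted_conj_rel_def
      by (auto intro!: bexI[of _ "\<one>\<^bsub>G\<^esub>"])
    show "sym (twisted_conj_rel G phi)"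
    proof (rule symI)
      fix a b assume "(a,b) \<in> twisted_conj_rel G phi"
      then obtain g where g: "a\<in>carrier G" "b\<in>carrier G" "g\<in>carrier G"
        "b = g \<otimes> a \<otimes> inv (phi g)" by (auto simp: twisted_conj_rel_def)
      have "inv g \<otimes> b \<otimes> inv (phi (inv g)) = inv g \<otimes> (g \<otimes> a \<otimes> inv (phi g)) \<otimes> phi g"
        using g by simp
      also have "\<dots> = a" using g by (simp add: m_assoc) (metis inv_closed l_inv l_one m_assoc)
      finally show "(b,a) \<in> twisted_conj_rel G phi"
        using g by (auto simp: twisted_conj_rel_def intro!: bexI[of _ "inv g"])
    qed
    show "trans (twisted_conj_rel G phi)"
    proof (rule transI)
      fix a b c assume "(a,b) \<in> twisted_conj_rel G phi" "(b,c) \<in> twisted_conj_rel G phi"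
      then obtain g k where g: "a\<in>carrier G" "b\<in>carrier G" "c\<in>carrier G" "g\<in>carrier G"
        "b = g \<otimes> a \<otimes> inv (phi g)" "k\<in>carrier G" "c = k \<otimes> b \<otimes> inv (phi k)"
        by (auto simp: twisted_conj_rel_def)
      have "(k \<otimes> g) \<otimes> a \<otimes> inv (phi (k \<otimes> g)) = k \<otimes> (g \<otimes> a \<otimes> inv (phi g)) \<otimes> inv (phi k)"
        using g by (simp add: m_assoc inv_mult_group)
      also have "\<dots> = c" using g by simp
      finally show "(a,c) \<in> twisted_conj_rel G phi"
        using g by (auto simp: twisted_conj_rel_def intro!: bexI[of _ "k \<otimes> g"])
    qed
    show "twisted_conj_rel G phi \<subseteq> carrier G \<times> carrier G"
      by (auto simp: twisted_conj_rel_def)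
  qed
qed

lemma funpow_hom:
  assumes G: "group G" and h: "phi \<in> hom G G"
  shows "(phi ^^ n) \<in> hom G G"
proof (induction n)
  case 0 thus ?case by (simp add: hom_def)
next
  case (Suc n)
  thus ?case using h by (auto simp: hom_def Pi_def)
qed

lemma funpow_inv:
  assumes "phi ` H \<subseteq> H" "x \<in> H" shows "(phi ^^ n) x \<in> H"
  using assms by (induction n) auto

lemma main_eq:
  fixes G :: "('a, 'b) monoid_scheme" (structure)
  assumes G: "group G" and h: "phi \<in> hom G G" and sub: "subgroup H G"
    and inv: "phi ` H \<subseteq> H" and ev: "\<forall>x \<in> carrier G. \<exists>n::nat. (phi ^^ n) x \<in> H"
  shows "reidemeister_number G phi = reidemeister_number (G\<lparr>carrier := H\<rparr>) phi"
proof -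
  interpret group G by fact
  let ?K = "G\<lparr>carrier := H\<rparr>"
  let ?r = "twisted_conj_rel G phi"
  let ?s = "twisted_conj_rel ?K phi"
  interpret gh: group_hom G G phi using h G by (simp add: group_hom_def group_hom_axioms_def)
  have HG: "H \<subseteq> carrier G" using sub subgroup.subset by blast
  have Kg: "group ?K" using subgroup.subgroup_is_group[OF sub G] .
  have Kh: "phi \<in> hom ?K ?K" using h inv HG by (auto simp: hom_def Pi_def subset_iff)
  have eA: "equiv (carrier G) ?r" by (rule twisted_equiv[OF G h])
  have eB': "equiv (carrier ?K) ?s" by (rule twisted_equiv[OF Kg Kh])
  hence eB: "equiv H ?s" by simp
  have sdef: "?s = {(a, b). a \<in> H \<and> b \<in> H \<and> (\<exists>g \<in> H. b = g \<otimes> a \<otimes> inv (phi g))}"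
  proof -
    have ic: "\<And>g. g\<in>H \<Longrightarrow> inv\<^bsub>?K\<^esub> (phi g) = inv (phi g)"
      using m_inv_consistent[OF sub] inv by blast
    show ?thesis unfolding twisted_conj_rel_def by (auto simp: ic)
  qed
  have step: "(a, phi a) \<in> ?r" if "a \<in> carrier G" for a
  proof -
    have "inv a \<otimes> a \<otimes> inv (phi (inv a)) = phi a"
      using that by simp
    thus ?thesis using that h by (auto simp: twisted_conj_rel_def hom_in_carrier intro!: bexI[of _ "inv a"])
  qed
  have stepH: "(a, phi a) \<in> ?s" if "a \<in> H" for a
  proof -
    have "inv a \<otimes> a \<otimes> inv (phi (inv a)) = phi a"
      using that HG by auto
    thus ?thesis using that inv sub by (auto simp: sdef subgroup.m_inv_closed intro!: bexI[of _ "inv a"])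
  qed
  have chain: "(a, (phi^^n) a) \<in> r" if "a \<in> A" "equiv A r" "\<And>a. a \<in> A \<Longrightarrow> (a, phi a) \<in> r"
    for a A r n
  proof (induction n)
    case 0 thus ?case using that by (simp add: equiv_def refl_on_def)
  next
    case (Suc n)
    have "(phi^^n) a \<in> A" using Suc that by (auto simp: equiv_def refl_on_def)
    hence "((phi^^n) a, (phi^^Suc n) a) \<in> r" using that by simp
    thus ?case using Suc that by (auto simp: equiv_def elim: transE)
  qed
  have rs: "\<forall>x\<in>H. \<forall>y\<in>H. (x,y)\<in>?r \<longleftrightarrow> (x,y)\<in>?s"
  proof (intro ballI iffI)
    fix a b assume ab: "a \<in> H" "b \<in> H" "(a,b) \<in> ?s"
    then obtain g where "g\<in>H" "b = g \<otimes> a \<otimes> inv (phi g)" unfolding sdef by blast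
    thus "(a,b) \<in> ?r" using ab HG by (auto simp: twisted_conj_rel_def)
  next
    fix a b assume ab: "a \<in> H" "b \<in> H" "(a,b) \<in> ?r"
    then obtain g where g: "g \<in> carrier G" "b = g \<otimes> a \<otimes> inv (phi g)"
      by (auto simp: twisted_conj_rel_def)
    obtain n where n: "(phi^^n) g \<in> H" using ev g by blast
    have hn: "(phi^^n) \<in> hom G G" by (rule funpow_hom[OF G h])
    have "(phi^^n) b = (phi^^n) g \<otimes> (phi^^n) a \<otimes> inv ((phi^^n) (phi g))"
    proof -
      interpret gn: group_hom G G "phi^^n" using hn G by (simp add: group_hom_def group_hom_axioms_def)
      have aG: "a \<in> carrier G" using ab HG by auto
      show ?thesis using g aG by simp
    qed
    also have "(phi^^n) (phi g) = phi ((phi^^n) g)" by (simp add: funpow_swap1)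
    finally have "((phi^^n) a, (phi^^n) b) \<in> ?s"
      unfolding sdef using n funpow_inv[OF inv ab(1)] funpow_inv[OF inv ab(2)] by blast
    moreover have "(a, (phi^^n) a) \<in> ?s" by (rule chain[OF ab(1) eB stepH])
    moreover have "(b, (phi^^n) b) \<in> ?s" by (rule chain[OF ab(2) eB stepH])
    ultimately show "(a,b) \<in> ?s" using eB by (meson equiv_def symE transE)
  qed
  have ex: "\<forall>x\<in>carrier G. \<exists>y\<in>H. (x,y)\<in>?r"
  proof
    fix x assume x: "x \<in> carrier G"
    then obtain n where "(phi^^n) x \<in> H" using ev by blast
    thus "\<exists>y\<in>H. (x,y)\<in>?r" using chain[OF x eA step] by blast
  qed
  have b: "bij_betw (\<lambda>X. ?r``X) (H//?s) (carrier G//?r)"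
    by (rule quot_bij[OF eA eB HG rs ex])
  have "reidemeister_classes ?K phi = H//?s" by (simp add: reidemeister_classes_def)
  moreover have "reidemeister_classes G phi = carrier G//?r" by (simp add: reidemeister_classes_def)
  ultimately show ?thesis using b bij_betw_finite bij_betw_same_card
    unfolding reidemeister_number_def by metis
qed

theorem mainTheorem7:
  fixes G :: "('a, 'b) monoid_scheme" and phi :: "'a \<Rightarrow> 'a" and H :: "'a set"
  assumes "group G"
    and "phi \<in> hom G G"
    and "subgroup H G"
    and "phi ` H \<subseteq> H"
    and "\<forall>x \<in> carrier G. \<exists>n::nat. (phi ^^ n) x \<in> H"
  shows "reidemeister_number G phi = reidemeister_number (G\<lparr>carrier := H\<rparr>) phi \<and>
         ((\<forall>n\<ge>1. reidemeister_number G (phi ^^ n) \<noteq> \<infinity>) \<longrightarrow>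
           reidemeister_zeta G phi = reidemeister_zeta (G\<lparr>carrier := H\<rparr>) phi)"
proof -
  have all: "reidemeister_number G (phi^^n) = reidemeister_number (G\<lparr>carrier := H\<rparr>) (phi^^n)"
    if n: "n \<ge> 1" for n
  proof (rule main_eq[OF assms(1) funpow_hom[OF assms(1,2)] assms(3)])
    show "(phi^^n) ` H \<subseteq> H" using funpow_inv[OF assms(4)] by blast
    show "\<forall>x \<in> carrier G. \<exists>m::nat. ((phi^^n) ^^ m) x \<in> H"
    proof
      fix x assume "x \<in> carrier G"
      then obtain k where k: "(phi^^k) x \<in> H" using assms(5) by blast
      have "((phi^^n)^^k) x = (phi^^(n*k - k + k)) x" using n
        by (simp add: funpow_mult mult.commute)
      also have "\<dots> = (phi^^(n*k-k)) ((phi^^k) x)" by (simp add: funpow_add)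
      finally show "\<exists>m::nat. ((phi^^n) ^^ m) x \<in> H"
        using funpow_inv[OF assms(4) k] by metis
    qed
  qed
  have "reidemeister_zeta G phi = reidemeister_zeta (G\<lparr>carrier := H\<rparr>) phi"
    unfolding reidemeister_zeta_def
    by (rule arg_cong[where f = "\<lambda>f. fps_exp 1 oo Abs_fps f"]) (auto simp: all)
  thus ?thesis using all[of 1] by simp
qed

end
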